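(* (Pasting Lemma in $\mathsf{PsTop}$.) Let $X$ be a pseudotopological space and let $\{X_j\}_{j\in J}$ be a cover of $X$ such that either (1) every $X_j$ is open in the topological space $RX$, or (2) every $X_j$ is closed in $RX$ and the family $\{X_j\}_{j\in J}$ is locally finite in $RX$ (every point has a neighbourhood in $RX$ meeting only finitely many $X_j$). Let $Y$ be a pseudotopological space and $f\colon X\to Y$ a function such that each restriction $f_j=f|_{X_j}\colon X_j\to Y$ is continuous, where $X_j$ carries the subspace pseudotopology. Then $f$ is continuous.
   Context: For a set $X$, $U(X)$ denotes the set of ultrafilters on $X$ and $\dot x$ the principal ultrafilter at $x\in X$. For a map $f\colon X\to Y$ and a filter $\mathscr F$ on $X$, $f_*\mathscr F=\{S\subset Y: f^{-1}(S)\in\mathscr F\}$ (an ultrafilter if $\mathscr F$ is). A pseudotopological structure on a set $X$ is a relation $u\subset U(X)\times X$ with $(\dot x,x)\in u$ for all $x\in X$; one writes $\mathscr U\to x$ for $(\mathscr U,x)\in u$, and $(X,u)$ is called a pseudotopological space. A map $f$ between pseudotopological spaces is continuous if $\mathscr U\to x$ implies $f_*\mathscr U\to f(x)$. For a subset $A\subset X$ with inclusion $i$, the subspace pseudotopology on $A$ is: $\mathscr U\to a$ in $A$ iff $i_*\mathscr U\to a$ in $X$. For a pseudotopological space $X$, $RX$ is the topological space with the same underlying set in which a set $S$ is open iff $S\in\mathscr U$ whenever $\mathscr U\to x$ with $x\in S$. *)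

theory Defs
  imports "HOL-Analysis.Analysis"
begin

definition ultrafilter_on :: "'a set \<Rightarrow> 'a set set \<Rightarrow> bool" where
  "ultrafilter_on X U \<longleftrightarrow>
     U \<subseteq> Pow X \<and> X \<in> U \<and> {} \<notin> U \<and>
     (\<forall>A B. A \<in> U \<and> B \<in> U \<longrightarrow> A \<inter> B \<in> U) \<and>
     (\<forall>A B. A \<in> U \<and> A \<subseteq> B \<and> B \<subseteq> X \<longrightarrow> B \<in> U) \<and>
     (\<forall>A. A \<subseteq> X \<longrightarrow> A \<in> U \<or> X - A \<in> U)"

definition principal_uf :: "'a set \<Rightarrow> 'a \<Rightarrow> 'a set set" where
  "principal_uf X x = {S. S \<subseteq> X \<and> x \<in> S}"

definition pushf :: "'a set \<Rightarrow> 'b set \<Rightarrow> ('a \<Rightarrow> 'b) \<Rightarrow> 'a set set \<Rightarrow> 'b set set" where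
  "pushf X Y f U = {S. S \<subseteq> Y \<and> {x \<in> X. f x \<in> S} \<in> U}"

definition pseudotop :: "'a set \<Rightarrow> ('a set set \<times> 'a) set \<Rightarrow> bool" where
  "pseudotop X u \<longleftrightarrow>
     (\<forall>(U, x) \<in> u. ultrafilter_on X U \<and> x \<in> X) \<and>
     (\<forall>x \<in> X. (principal_uf X x, x) \<in> u)"

definition ps_continuous ::
  "'a set \<Rightarrow> ('a set set \<times> 'a) set \<Rightarrow> 'b set \<Rightarrow> ('b set set \<times> 'b) set \<Rightarrow> ('a \<Rightarrow> 'b) \<Rightarrow> bool" where
  "ps_continuous X u Y v f \<longleftrightarrow>
     f ` X \<subseteq> Y \<and> (\<forall>U x. (U, x) \<in> u \<longrightarrow> (pushf X Y f U, f x) \<in> v)"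

definition subspace_ps :: "'a set \<Rightarrow> ('a set set \<times> 'a) set \<Rightarrow> 'a set \<Rightarrow> ('a set set \<times> 'a) set" where
  "subspace_ps X u A =
     {(U, a). ultrafilter_on A U \<and> a \<in> A \<and> (pushf A X (\<lambda>y. y) U, a) \<in> u}"

definition R_open :: "'a set \<Rightarrow> ('a set set \<times> 'a) set \<Rightarrow> 'a set \<Rightarrow> bool" where
  "R_open X u S \<longleftrightarrow>
     S \<subseteq> X \<and> (\<forall>U x. (U, x) \<in> u \<and> ultrafilter_on X U \<and> x \<in> S \<longrightarrow> S \<in> U)"

lemma istopology_R_open: "istopology (R_open X u)"
proof -
  have inter: "R_open X u (S \<inter> T)" if "R_open X u S" "R_open X u T" for S T
    using that unfolding R_open_def ultrafilter_on_def by blast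
  have union: "R_open X u (\<Union>K)" if H: "\<forall>S\<in>K. R_open X u S" for K
    unfolding R_open_def
  proof (intro conjI allI impI)
    show "\<Union>K \<subseteq> X" using H unfolding R_open_def by blast
  next
    fix U x assume a: "(U, x) \<in> u \<and> ultrafilter_on X U \<and> x \<in> \<Union>K"
    then obtain S where S: "S \<in> K" "x \<in> S" by blast
    with H a have "S \<in> U" unfolding R_open_def by blast
    moreover have "S \<subseteq> \<Union>K" "\<Union>K \<subseteq> X" using S H unfolding R_open_def by blast+
    ultimately show "\<Union>K \<in> U" using a unfolding ultrafilter_on_def by blast
  qed
  show ?thesis unfolding istopology_def using inter union by blast
qed

definition RX :: "'a set \<Rightarrow> ('a set set \<times> 'a) set \<Rightarrow> 'a topology" where
  "RX X u = topology (R_open X u)"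

lemma openin_RX: "openin (RX X u) S \<longleftrightarrow> R_open X u S"
  unfolding RX_def using istopology_R_open by (simp add: istopology_R_open)

definition locally_finite_family :: "'a topology \<Rightarrow> 'i set \<Rightarrow> ('i \<Rightarrow> 'a set) \<Rightarrow> bool" where
  "locally_finite_family T J A \<longleftrightarrow>
     (\<forall>x \<in> topspace T. \<exists>N. x \<in> N \<and> (\<exists>W. openin T W \<and> x \<in> W \<and> W \<subseteq> N) \<and>
        finite {j \<in> J. A j \<inter> N \<noteq> {}})"

end

theory Submission
  imports Defs
begin

lemma uf_D:
  assumes "ultrafilter_on X U"
  shows "U \<subseteq> Pow X \<and> X \<in> U \<and> {} \<notin> U \<and>
     (\<forall>A B. A \<in> U \<and> B \<in> U \<longrightarrow> A \<inter> B \<in> U) \<and>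
     (\<forall>A B. A \<in> U \<and> A \<subseteq> B \<and> B \<subseteq> X \<longrightarrow> B \<in> U) \<and>
     (\<forall>A. A \<subseteq> X \<longrightarrow> A \<in> U \<or> X - A \<in> U)"
  using assms unfolding ultrafilter_on_def .

lemma uf_pow: assumes "ultrafilter_on X U" "S \<in> U" shows "S \<subseteq> X"
proof -
  have "U \<subseteq> Pow X" using conjunct1[OF uf_D[OF assms(1)]] .
  then show ?thesis using assms(2) by auto
qed
lemma uf_top: assumes "ultrafilter_on X U" shows "X \<in> U"
  using conjunct1[OF conjunct2[OF uf_D[OF assms(1)]]] .
lemma uf_empty: assumes "ultrafilter_on X U" shows "{} \<notin> U"
  using conjunct1[OF conjunct2[OF conjunct2[OF uf_D[OF assms(1)]]]] .
lemma uf_int: assumes "ultrafilter_on X U" "A \<in> U" "B \<in> U" shows "A \<inter> B \<in> U"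
proof -
  have h: "\<forall>A B. A \<in> U \<and> B \<in> U \<longrightarrow> A \<inter> B \<in> U"
    using conjunct1[OF conjunct2[OF conjunct2[OF conjunct2[OF uf_D[OF assms(1)]]]]] .
  show ?thesis using h[rule_format, OF conjI[OF assms(2,3)]] .
qed
lemma uf_up: assumes "ultrafilter_on X U" "A \<in> U" "A \<subseteq> B" "B \<subseteq> X" shows "B \<in> U"
proof -
  have h: "\<forall>A B. A \<in> U \<and> A \<subseteq> B \<and> B \<subseteq> X \<longrightarrow> B \<in> U"
    using conjunct1[OF conjunct2[OF conjunct2[OF conjunct2[OF conjunct2[OF uf_D[OF assms(1)]]]]]] .
  show ?thesis using h[rule_format, OF conjI[OF assms(2) conjI[OF assms(3,4)]]] .
qed
lemma uf_compl: assumes "ultrafilter_on X U" "A \<subseteq> X" shows "A \<in> U \<or> X - A \<in> U"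
proof -
  have h: "\<forall>A. A \<subseteq> X \<longrightarrow> A \<in> U \<or> X - A \<in> U"
    using conjunct2[OF conjunct2[OF conjunct2[OF conjunct2[OF conjunct2[OF uf_D[OF assms(1)]]]]]] .
  show ?thesis using h[rule_format, OF assms(2)] .
qed

lemma uf_disj: "ultrafilter_on X U \<Longrightarrow> A \<in> U \<Longrightarrow> B \<in> U \<Longrightarrow> A \<inter> B = {} \<Longrightarrow> False"
proof -
  assume a: "ultrafilter_on X U" "A \<in> U" "B \<in> U" "A \<inter> B = {}"
  have "A \<inter> B \<in> U" using uf_int[OF a(1-3)] .
  then have "{} \<in> U" using a(4) by simp
  then show False using uf_empty[OF a(1)] by simp
qed

lemma uf_union2:
  assumes uf: "ultrafilter_on X U" and h: "A \<union> B \<in> U" "A \<subseteq> X" "B \<subseteq> X"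
  shows "A \<in> U \<or> B \<in> U"
proof (rule ccontr)
  assume n: "\<not> (A \<in> U \<or> B \<in> U)"
  then have "X - A \<in> U" using uf_compl[OF uf h(2)] by simp
  then have "(A \<union> B) \<inter> (X - A) \<in> U" using uf_int[OF uf h(1)] by simp
  moreover have "(A \<union> B) \<inter> (X - A) \<subseteq> B" by blast
  ultimately have "B \<in> U" using uf_up[OF uf] h(3) by blast
  with n show False by simp
qed

lemma uf_finite_union:
  assumes uf: "ultrafilter_on X U" and fin: "finite F"
  shows "(\<Union>j\<in>F. A j) \<in> U \<Longrightarrow> (\<forall>j\<in>F. A j \<subseteq> X) \<Longrightarrow> \<exists>j\<in>F. A j \<in> U"
  using fin
proof (induction F rule: finite_induct)
  case empty
  then show ?case using uf_empty[OF uf] by simp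
next
  case (insert k F)
  have "A k \<union> (\<Union>j\<in>F. A j) \<in> U" using insert.prems by simp
  moreover have "A k \<subseteq> X" "(\<Union>j\<in>F. A j) \<subseteq> X" using insert.prems by auto
  ultimately have "A k \<in> U \<or> (\<Union>j\<in>F. A j) \<in> U"
    using uf_union2[OF uf] by blast
  then show ?case using insert by blast
qed

lemma R_open_in: "R_open X u S \<Longrightarrow> (U, x) \<in> u \<Longrightarrow> ultrafilter_on X U \<Longrightarrow> x \<in> S \<Longrightarrow> S \<in> U"
  unfolding R_open_def by blast

theorem lemma3p2:
  fixes X :: "'a set" and u :: "('a set set \<times> 'a) set"
    and Y :: "'b set" and v :: "('b set set \<times> 'b) set"
    and J :: "'i set" and XJ :: "'i \<Rightarrow> 'a set"
    and f :: "'a \<Rightarrow> 'b"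
  assumes psX: "pseudotop X u"
    and psY: "pseudotop Y v"
    and cover: "(\<Union>j\<in>J. XJ j) = X"
    and cases: "(\<forall>j\<in>J. openin (RX X u) (XJ j)) \<or>
                ((\<forall>j\<in>J. closedin (RX X u) (XJ j)) \<and> locally_finite_family (RX X u) J XJ)"
    and cont: "\<forall>j\<in>J. ps_continuous (XJ j) (subspace_ps X u (XJ j)) Y v f"
  shows "ps_continuous X u Y v f"
  unfolding ps_continuous_def
proof (intro conjI allI impI)
  show "f ` X \<subseteq> Y" using cont cover unfolding ps_continuous_def by blast
next
  fix U x assume Ux: "(U, x) \<in> u"
  have uf: "ultrafilter_on X U" and xX: "x \<in> X" using psX Ux unfolding pseudotop_def by auto
  have XJsub: "\<forall>j\<in>J. XJ j \<subseteq> X" using cover by blast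
  have ROX: "R_open X u X" unfolding R_open_def using uf_top by blast
  have topX: "topspace (RX X u) = X"
  proof
    show "topspace (RX X u) \<subseteq> X" unfolding topspace_def by (auto simp: openin_RX R_open_def)
    show "X \<subseteq> topspace (RX X u)" using ROX openin_subset openin_RX by metis
  qed
  obtain j where j: "j \<in> J" "x \<in> XJ j" "XJ j \<in> U"
  proof -
    from cases show ?thesis
    proof
      assume op: "\<forall>j\<in>J. openin (RX X u) (XJ j)"
      obtain j where j1: "j \<in> J" "x \<in> XJ j" using xX cover by blast
      moreover have "XJ j \<in> U" using op j1 Ux uf R_open_in by (metis openin_RX)
      ultimately show ?thesis using that by blast
    next
      assume cl: "(\<forall>j\<in>J. closedin (RX X u) (XJ j)) \<and> locally_finite_family (RX X u) J XJ"
      then have "\<exists>N. x \<in> N \<and> (\<exists>W. openin (RX X u) W \<and> x \<in> W \<and> W \<subseteq> N) \<and>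
        finite {j \<in> J. XJ j \<inter> N \<noteq> {}}"
        using xX topX unfolding locally_finite_family_def by simp
      then obtain N W where NW: "x \<in> N" "openin (RX X u) W" "x \<in> W" "W \<subseteq> N"
          "finite {j \<in> J. XJ j \<inter> N \<noteq> {}}"
        by blast
      define F where "F = {j \<in> J. XJ j \<inter> N \<noteq> {}}"
      have RW: "R_open X u W" using NW(2) by (simp add: openin_RX)
      have WU: "W \<in> U" using R_open_in[OF RW Ux uf NW(3)] .
      have WX: "W \<subseteq> X" using RW by (simp add: R_open_def)
      have finF: "finite F" unfolding F_def using NW(5) .
      have UW: "(\<Union>j\<in>F. XJ j \<inter> W) = W"
      proof
        show "(\<Union>j\<in>F. XJ j \<inter> W) \<subseteq> W" by blast
        show "W \<subseteq> (\<Union>j\<in>F. XJ j \<inter> W)"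
        proof
          fix w assume wW: "w \<in> W"
          then have "w \<in> X" using WX by blast
          then obtain i where i: "i \<in> J" "w \<in> XJ i" using cover by blast
          have "w \<in> N" using wW NW(4) by blast
          then have "i \<in> F" unfolding F_def using i by blast
          then show "w \<in> (\<Union>j\<in>F. XJ j \<inter> W)" using i wW by blast
        qed
      qed
      have sub: "\<forall>j\<in>F. XJ j \<inter> W \<subseteq> X" using WX by blast
      have "\<exists>j\<in>F. XJ j \<inter> W \<in> U"
        using uf_finite_union[OF uf finF, of "\<lambda>j. XJ j \<inter> W"] UW WU sub by simp
      then obtain k where k: "k \<in> F" "XJ k \<inter> W \<in> U" by blast
      have kJ: "k \<in> J" using k unfolding F_def by simp
      have kX: "XJ k \<subseteq> X" using XJsub kJ by blast
      have kU: "XJ k \<in> U" using uf_up[OF uf k(2) _ kX] by simp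
      have "x \<in> XJ k"
      proof (rule ccontr)
        assume nx: "x \<notin> XJ k"
        have "openin (RX X u) (topspace (RX X u) - XJ k)" using cl kJ unfolding closedin_def by blast
        then have "openin (RX X u) (X - XJ k)" unfolding topX .
        then have "R_open X u (X - XJ k)" unfolding openin_RX .
        then have "X - XJ k \<in> U" using R_open_in[OF _ Ux uf] nx xX by blast
        moreover have "(X - XJ k) \<inter> XJ k = {}" by blast
        ultimately show False using uf_disj[OF uf _ kU] by blast
      qed
      then show ?thesis using that kJ kU by blast
    qed
  qed
  define A where "A = XJ j"
  define U' where "U' = {S. S \<subseteq> A \<and> S \<in> U}"
  have AX: "A \<subseteq> X" using XJsub j A_def by blast
  have AU: "A \<in> U" using j A_def by simp
  have ufU': "ultrafilter_on A U'"
    unfolding ultrafilter_on_def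
  proof (intro conjI allI impI)
    show "U' \<subseteq> Pow A" unfolding U'_def by blast
    show "A \<in> U'" unfolding U'_def using AU by blast
    show "{} \<notin> U'" unfolding U'_def using uf_empty[OF uf] by blast
  next
    fix S T assume "S \<in> U' \<and> T \<in> U'"
    then show "S \<inter> T \<in> U'" unfolding U'_def using uf_int[OF uf] by blast
  next
    fix S T assume h: "S \<in> U' \<and> S \<subseteq> T \<and> T \<subseteq> A"
    then have "T \<in> U" using uf_up[OF uf, of S T] AX unfolding U'_def by blast
    then show "T \<in> U'" using h unfolding U'_def by blast
  next
    fix S assume h: "S \<subseteq> A"
    show "S \<in> U' \<or> A - S \<in> U'"
    proof (cases "S \<in> U")
      case True then show ?thesis using h unfolding U'_def by blast
    next
      case False
      then have "X - S \<in> U" using uf_compl[OF uf, of S] h AX by blast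
      then have "(X - S) \<inter> A \<in> U" using uf_int[OF uf _ AU] by blast
      moreover have "(X - S) \<inter> A = A - S" using AX by blast
      ultimately show ?thesis unfolding U'_def by auto
    qed
  qed
  have push1: "pushf A X (\<lambda>y. y) U' = U"
  proof
    show "pushf A X (\<lambda>y. y) U' \<subseteq> U"
    proof
      fix S assume "S \<in> pushf A X (\<lambda>y. y) U'"
      then have "S \<subseteq> X" "{y \<in> A. y \<in> S} \<in> U" unfolding pushf_def U'_def by auto
      moreover have "{y \<in> A. y \<in> S} \<subseteq> S" by blast
      ultimately show "S \<in> U" using uf_up[OF uf] by blast
    qed
  next
    show "U \<subseteq> pushf A X (\<lambda>y. y) U'"
    proof
      fix S assume SU: "S \<in> U"
      then have "S \<subseteq> X" "S \<inter> A \<in> U" using uf_pow[OF uf] uf_int[OF uf SU AU] by auto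
      moreover have "{y \<in> A. y \<in> S} = S \<inter> A" by blast
      ultimately show "S \<in> pushf A X (\<lambda>y. y) U'" unfolding pushf_def U'_def by auto
    qed
  qed
  have "(U', x) \<in> subspace_ps X u A"
    unfolding subspace_ps_def using ufU' j A_def push1 Ux by simp
  then have "(pushf A Y f U', f x) \<in> v" using cont j A_def unfolding ps_continuous_def by blast
  moreover have "pushf A Y f U' = pushf X Y f U"
  proof -
    have "{y \<in> A. f y \<in> S} \<in> U \<longleftrightarrow> {y \<in> X. f y \<in> S} \<in> U" for S
    proof
      assume "{y \<in> A. f y \<in> S} \<in> U"
      moreover have "{y \<in> A. f y \<in> S} \<subseteq> {y \<in> X. f y \<in> S}" using AX by blast
      ultimately show "{y \<in> X. f y \<in> S} \<in> U" using uf_up[OF uf] by blast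
    next
      assume "{y \<in> X. f y \<in> S} \<in> U"
      then have "{y \<in> X. f y \<in> S} \<inter> A \<in> U" using uf_int[OF uf _ AU] by blast
      moreover have "{y \<in> X. f y \<in> S} \<inter> A = {y \<in> A. f y \<in> S}" using AX by blast
      ultimately show "{y \<in> A. f y \<in> S} \<in> U" by simp
    qed
    then show ?thesis unfolding pushf_def U'_def by auto
  qed
  ultimately show "(pushf X Y f U, f x) \<in> v" by simp
qed

end
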